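(* Let $\Gamma$ be a hyperbolic graph and $D\ge 2$ an integer. Then the $2D$-polarized lattice $\mathcal{F}_h(\Gamma)$ is hyperbolic if and only if an intrinsic polarization $h_\Gamma$ of $\Gamma$ exists and $2D\le h_\Gamma^2$.
   Context: Graphs are finite, without loops or multiple edges. For a graph $\Gamma$, $\mathbb{Z}\Gamma$ is the lattice freely generated by the vertices, with $v^2=-2$ and $u\cdot v=1$ or $0$ according as distinct vertices $u,v$ are adjacent or not. For a lattice $L$, $\ker L=\{x\in L: x\cdot y=0\ \forall y\in L\}$, and $L/\ker$ denotes $L/\ker L$ with the induced form. The lattice $\mathcal{F}_h(\Gamma):=(\mathbb{Z}\Gamma\oplus\mathbb{Z}h)/\ker$, where the form on $\mathbb{Z}\Gamma\oplus\mathbb{Z}h$ (a direct sum of groups, not an orthogonal sum) extends that of $\mathbb{Z}\Gamma$ by $h^2=2D$ and $v\cdot h=1$ for every vertex $v$. A lattice is hyperbolic if the positive inertia index of its real quadratic form is $1$; $\Gamma$ is hyperbolic if $\mathbb{Z}\Gamma$ is. An intrinsic polarization is a vector $h_\Gamma\in\mathbb{Z}\Gamma\otimes\mathbb{Q}$ with $v\cdot h_\Gamma=1$ for every vertex $v$; if it exists, it is unique modulo $\ker\mathbb{Z}\Gamma$, so $h_\Gamma^2\in\mathbb{Q}$ is well defined. *)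

theory Defs
  imports "HOL-Analysis.Analysis"
begin

definition simple_graph :: "('v \<Rightarrow> 'v \<Rightarrow> bool) \<Rightarrow> bool" where
  "simple_graph E \<longleftrightarrow> (\<forall>u v. E u v \<longleftrightarrow> E v u) \<and> (\<forall>v. \<not> E v v)"

text \<open>Gram matrix of the lattice ZGamma in the basis of vertices.\<close>
definition graph_gram :: "('v \<Rightarrow> 'v \<Rightarrow> bool) \<Rightarrow> 'v \<Rightarrow> 'v \<Rightarrow> int" where
  "graph_gram E u v = (if u = v then -2 else if E u v then 1 else 0)"

text \<open>Gram matrix of ZGamma + Zh (basis: Some v for vertex v, None for h),
  with h^2 = 2D and v.h = 1.\<close>
definition pol_gram :: "('v \<Rightarrow> 'v \<Rightarrow> bool) \<Rightarrow> int \<Rightarrow> 'v option \<Rightarrow> 'v option \<Rightarrow> int" where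
  "pol_gram E D x y = (case (x, y) of
      (None, None) \<Rightarrow> 2 * D
    | (None, Some _) \<Rightarrow> 1
    | (Some _, None) \<Rightarrow> 1
    | (Some u, Some v) \<Rightarrow> graph_gram E u v)"

definition qform :: "('i::finite \<Rightarrow> 'i \<Rightarrow> int) \<Rightarrow> real^'i \<Rightarrow> real" where
  "qform G x = (\<Sum>i\<in>UNIV. \<Sum>j\<in>UNIV. x$i * of_int (G i j) * x$j)"

definition pos_inertia :: "('i::finite \<Rightarrow> 'i \<Rightarrow> int) \<Rightarrow> nat" where
  "pos_inertia G = Max {dim W | W. subspace W \<and> (\<forall>x\<in>W. x \<noteq> 0 \<longrightarrow> qform G x > 0)}"

definition hyperbolic_form :: "('i::finite \<Rightarrow> 'i \<Rightarrow> int) \<Rightarrow> bool" where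
  "hyperbolic_form G \<longleftrightarrow> pos_inertia G = 1"

definition hyperbolic_graph :: "('v::finite \<Rightarrow> 'v \<Rightarrow> bool) \<Rightarrow> bool" where
  "hyperbolic_graph E \<longleftrightarrow> hyperbolic_form (graph_gram E)"

text \<open>F_h(Gamma) = (ZGamma + Zh)/ker. The positive inertia index of L/ker L
  equals that of L (the kernel is contained in the radical of the real form),
  so hyperbolicity of F_h(Gamma) is that of the form pol_gram E D.\<close>
definition Fh_hyperbolic :: "('v::finite \<Rightarrow> 'v \<Rightarrow> bool) \<Rightarrow> int \<Rightarrow> bool" where
  "Fh_hyperbolic E D \<longleftrightarrow> hyperbolic_form (pol_gram E D)"

definition intrinsic_pol :: "('v::finite \<Rightarrow> 'v \<Rightarrow> bool) \<Rightarrow> ('v \<Rightarrow> rat) \<Rightarrow> bool" where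
  "intrinsic_pol E h \<longleftrightarrow> (\<forall>v. (\<Sum>u\<in>UNIV. h u * of_int (graph_gram E u v)) = 1)"

definition pol_square :: "('v::finite \<Rightarrow> 'v \<Rightarrow> bool) \<Rightarrow> ('v \<Rightarrow> rat) \<Rightarrow> rat" where
  "pol_square E h = (\<Sum>u\<in>UNIV. \<Sum>w\<in>UNIV. h u * h w * of_int (graph_gram E u w))"

end

theory Submission
  imports Defs
begin

definition bil :: "('i::finite \<Rightarrow> 'i \<Rightarrow> int) \<Rightarrow> real^'i \<Rightarrow> real^'i \<Rightarrow> real" where
  "bil G x y = (\<Sum>i\<in>UNIV. \<Sum>j\<in>UNIV. x$i * of_int (G i j) * y$j)"

lemma qform_bil: "qform G x = bil G x x"
  by (simp add: qform_def bil_def)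

lemma bil_add1: "bil G (x + y) z = bil G x z + bil G y z"
  by (simp add: bil_def algebra_simps sum.distrib)

lemma bil_add2: "bil G z (x + y) = bil G z x + bil G z y"
  by (simp add: bil_def algebra_simps sum.distrib)

lemma bil_scale1: "bil G (c *\<^sub>R x) z = c * bil G x z"
  by (simp add: bil_def sum_distrib_left algebra_simps)

lemma bil_scale2: "bil G z (c *\<^sub>R x) = c * bil G z x"
  by (simp add: bil_def sum_distrib_left algebra_simps)

lemma bil_sym:
  assumes "\<And>i j. G i j = G j i"
  shows "bil G x y = bil G y x"
  unfolding bil_def
  by (subst sum.swap) (simp add: assms algebra_simps)

lemma qform_scale: "qform G (c *\<^sub>R x) = c^2 * qform G x"
  by (simp add: qform_bil bil_scale1 bil_scale2 power2_eq_square)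

lemma qform_add_sym:
  assumes "\<And>i j. G i j = G j i"
  shows "qform G (x + y) = qform G x + 2 * bil G x y + qform G y"
  using bil_sym[of G x y, OF assms]
  by (simp add: qform_bil bil_add1 bil_add2)

lemma qform_zero[simp]: "qform G 0 = 0"
  by (simp add: qform_def)

definition posdef :: "('i::finite \<Rightarrow> 'i \<Rightarrow> int) \<Rightarrow> (real^'i) set \<Rightarrow> bool" where
  "posdef G W \<longleftrightarrow> subspace W \<and> (\<forall>x\<in>W. x \<noteq> 0 \<longrightarrow> qform G x > 0)"

lemma pi_set_finite: fixes G :: "'i::finite \<Rightarrow> 'i \<Rightarrow> int" shows "finite {dim W | W. subspace W \<and> (\<forall>x\<in>W. x \<noteq> 0 \<longrightarrow> qform G x > 0)}"
proof -
  have "{dim W | W. subspace W \<and> (\<forall>x\<in>W. x \<noteq> 0 \<longrightarrow> qform G x > 0)} \<subseteq> {..CARD('i)}"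
    using dim_subset_UNIV_cart by auto
  then show ?thesis using finite_subset by blast
qed

lemma pi_ge: "posdef G W \<Longrightarrow> dim W \<le> pos_inertia G"
  unfolding pos_inertia_def posdef_def
  by (rule Max_ge[OF pi_set_finite]) blast

lemma pi_mem: "\<exists>W. posdef G W \<and> dim W = pos_inertia G"
proof -
  have "{0} \<in> {W. subspace W \<and> (\<forall>x\<in>W. x \<noteq> 0 \<longrightarrow> qform G x > 0)}"
    by (simp add: subspace_0)
  then have "{dim W | W. subspace W \<and> (\<forall>x\<in>W. x \<noteq> 0 \<longrightarrow> qform G x > 0)} \<noteq> {}" by blast
  from Max_in[OF pi_set_finite this] show ?thesis
    unfolding pos_inertia_def posdef_def by auto
qed

lemma pi_le1: "(\<And>W. posdef G W \<Longrightarrow> dim W \<le> 1) \<Longrightarrow> pos_inertia G \<le> 1"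
  using pi_mem by metis

lemma pi_ge1:
  assumes "qform G z > 0"
  shows "pos_inertia G \<ge> 1"
proof -
  have z: "z \<noteq> 0" using assms by auto
  have "posdef G (span {z})"
    unfolding posdef_def
    using assms subspace_span[of "{z}"] by (auto simp: qform_scale span_singleton)
  moreover have "dim (span {z}) = 1"
    using z by (simp add: dim_span_eq_card_independent)
  ultimately show ?thesis using pi_ge by metis
qed

lemma pi_ge2:
  assumes "\<And>s r. s \<noteq> 0 \<or> r \<noteq> 0 \<Longrightarrow> qform G (s *\<^sub>R za + r *\<^sub>R zb) > 0"
  shows "pos_inertia G \<ge> 2"
proof -
  have nz: "s *\<^sub>R za + r *\<^sub>R zb \<noteq> 0" if "s \<noteq> 0 \<or> r \<noteq> 0" for s r
    using assms[OF that] by auto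
  have sp: "span {za, zb} = {s *\<^sub>R za + r *\<^sub>R zb | s r. True}"
    apply (auto simp: span_insert span_singleton)
     apply (metis diff_add_cancel add.commute)
    apply (rule_tac x=s in exI, rule_tac x=r in exI, simp)
    done
  have "posdef G (span {za, zb})"
    unfolding posdef_def
  proof (intro conjI ballI impI)
    show "subspace (span {za, zb})" by (rule subspace_span)
  next
    fix x assume x: "x \<in> span {za, zb}" "x \<noteq> 0"
    then obtain s r where xs: "x = s *\<^sub>R za + r *\<^sub>R zb" using sp by blast
    have "s \<noteq> 0 \<or> r \<noteq> 0" using x(2) xs by auto
    then show "qform G x > 0" using assms xs by simp
  qed
  moreover have "dim (span {za, zb}) = 2"
  proof -
    have ne: "za \<noteq> zb" using nz[of 1 "-1"] by auto
    have "za \<notin> span {zb}"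
    proof
      assume "za \<in> span {zb}"
      then obtain k where "za = k *\<^sub>R zb" by (auto simp: span_singleton)
      then have "1 *\<^sub>R za + (- k) *\<^sub>R zb = 0" by simp
      then show False using nz[of 1 "-k"] by simp
    qed
    moreover have "zb \<noteq> 0" using nz[of 0 1] by auto
    ultimately have "independent {za, zb}"
      by (simp add: independent_insert)
    then show ?thesis using ne by (simp add: dim_eq_card_independent)
  qed
  ultimately show ?thesis using pi_ge by metis
qed

lemma fredholm:
  fixes A :: "'i \<Rightarrow> 'j \<Rightarrow> 'a::field"
  assumes "finite I" "finite J"
  shows "(\<exists>g. \<forall>j\<in>J. (\<Sum>i\<in>I. g i * A i j) = b j) \<or>
         (\<exists>k. (\<forall>i\<in>I. (\<Sum>j\<in>J. A i j * k j) = 0) \<and> (\<Sum>j\<in>J. b j * k j) \<noteq> 0)"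
  using assms(1)
proof (induction I arbitrary: b rule: finite_induct)
  case empty
  show ?case
  proof (cases "\<forall>j\<in>J. b j = 0")
    case True then show ?thesis by auto
  next
    case False
    then obtain j0 where j0: "j0 \<in> J" "b j0 \<noteq> 0" by auto
    define k where "k = (\<lambda>j. if j = j0 then (1::'a) else 0)"
    have "(\<Sum>j\<in>J. b j * k j) = (\<Sum>j\<in>J. if j = j0 then b j else 0)"
      by (rule sum.cong) (auto simp: k_def)
    also have "\<dots> = b j0" using j0 assms(2) by (simp add: sum.delta')
    finally show ?thesis using j0 by auto
  qed
next
  case (insert i0 I)
  note IH = insert.IH
  from IH[of b] show ?case
  proof
    assume "\<exists>g. \<forall>j\<in>J. (\<Sum>i\<in>I. g i * A i j) = b j"
    then obtain g where g: "\<forall>j\<in>J. (\<Sum>i\<in>I. g i * A i j) = b j" by blast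
    define g' where "g' = g(i0 := 0)"
    have "\<forall>j\<in>J. (\<Sum>i\<in>insert i0 I. g' i * A i j) = b j"
    proof
      fix j assume "j \<in> J"
      have "(\<Sum>i\<in>insert i0 I. g' i * A i j) = (\<Sum>i\<in>I. g' i * A i j)"
        using insert.hyps by (simp add: g'_def)
      also have "\<dots> = (\<Sum>i\<in>I. g i * A i j)"
        using insert.hyps by (intro sum.cong) (auto simp: g'_def)
      finally show "(\<Sum>i\<in>insert i0 I. g' i * A i j) = b j" using g \<open>j \<in> J\<close> by simp
    qed
    then show ?case by blast
  next
    assume "\<exists>k. (\<forall>i\<in>I. (\<Sum>j\<in>J. A i j * k j) = 0) \<and> (\<Sum>j\<in>J. b j * k j) \<noteq> 0"
    then obtain k where k1: "\<forall>i\<in>I. (\<Sum>j\<in>J. A i j * k j) = 0"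
      and k2: "(\<Sum>j\<in>J. b j * k j) \<noteq> 0" by blast
    define \<alpha> where "\<alpha> = (\<Sum>j\<in>J. A i0 j * k j)"
    define \<beta> where "\<beta> = (\<Sum>j\<in>J. b j * k j)"
    show ?case
    proof (cases "\<alpha> = 0")
      case True
      then have "\<forall>i\<in>insert i0 I. (\<Sum>j\<in>J. A i j * k j) = 0" using k1 by (auto simp: \<alpha>_def)
      then show ?thesis using k2 by blast
    next
      case False
      define b' where "b' = (\<lambda>j. b j - (\<beta> / \<alpha>) * A i0 j)"
      from IH[of b'] show ?thesis
      proof
        assume "\<exists>g. \<forall>j\<in>J. (\<Sum>i\<in>I. g i * A i j) = b' j"
        then obtain g where g: "\<forall>j\<in>J. (\<Sum>i\<in>I. g i * A i j) = b' j" by blast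
        define g' where "g' = g(i0 := \<beta> / \<alpha>)"
        have "\<forall>j\<in>J. (\<Sum>i\<in>insert i0 I. g' i * A i j) = b j"
        proof
          fix j assume "j \<in> J"
          have "(\<Sum>i\<in>insert i0 I. g' i * A i j) = \<beta> / \<alpha> * A i0 j + (\<Sum>i\<in>I. g' i * A i j)"
            using insert.hyps by (simp add: g'_def)
          also have "(\<Sum>i\<in>I. g' i * A i j) = (\<Sum>i\<in>I. g i * A i j)"
            using insert.hyps by (intro sum.cong) (auto simp: g'_def)
          finally show "(\<Sum>i\<in>insert i0 I. g' i * A i j) = b j"
            using g \<open>j \<in> J\<close> by (simp add: b'_def)
        qed
        then show ?thesis by blast
      next
        assume "\<exists>k. (\<forall>i\<in>I. (\<Sum>j\<in>J. A i j * k j) = 0) \<and> (\<Sum>j\<in>J. b' j * k j) \<noteq> 0"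
        then obtain k' where k'1: "\<forall>i\<in>I. (\<Sum>j\<in>J. A i j * k' j) = 0"
          and k'2: "(\<Sum>j\<in>J. b' j * k' j) \<noteq> 0" by blast
        define \<gamma> where "\<gamma> = (\<Sum>j\<in>J. A i0 j * k' j)"
        define k'' where "k'' = (\<lambda>j. k' j - (\<gamma> / \<alpha>) * k j)"
        have lin: "(\<Sum>j\<in>J. c j * k'' j) = (\<Sum>j\<in>J. c j * k' j) - (\<gamma> / \<alpha>) * (\<Sum>j\<in>J. c j * k j)" for c
          by (simp add: k''_def algebra_simps sum_subtractf sum_distrib_left)
        have "\<forall>i\<in>insert i0 I. (\<Sum>j\<in>J. A i j * k'' j) = 0"
        proof
          fix i assume i: "i \<in> insert i0 I"
          show "(\<Sum>j\<in>J. A i j * k'' j) = 0"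
          proof (cases "i = i0")
            case True
            then show ?thesis using lin[of "A i0"] False by (simp add: \<alpha>_def[symmetric] \<gamma>_def[symmetric])
          next
            case False
            then have "i \<in> I" using i by simp
            then show ?thesis using lin[of "A i"] k1 k'1 by simp
          qed
        qed
        moreover have "(\<Sum>j\<in>J. b j * k'' j) = (\<Sum>j\<in>J. b' j * k' j)"
        proof -
          have "(\<Sum>j\<in>J. b' j * k' j) = (\<Sum>j\<in>J. b j * k' j) - (\<beta> / \<alpha>) * \<gamma>"
            by (simp add: b'_def \<gamma>_def algebra_simps sum_subtractf sum_distrib_left)
          then show ?thesis using lin[of b] by (simp add: \<beta>_def[symmetric])
        qed
        ultimately show ?thesis using k'2 by metis
      qed
    qed
  qed
qed

definition emb :: "real^'v \<Rightarrow> real \<Rightarrow> real^('v option)" where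
  "emb a c = (\<chi> z. case z of None \<Rightarrow> c | Some v \<Rightarrow> a$v)"

definition av :: "real^('v option) \<Rightarrow> real^'v" where
  "av x = (\<chi> v. x$(Some v))"

definition phi :: "real^'v \<Rightarrow> real" where
  "phi a = (\<Sum>v\<in>UNIV. a$v)"

lemma emb_av: "emb (av x) (x$None) = x"
  by (simp add: emb_def av_def vec_eq_iff split: option.splits)

lemma emb_comb: "s *\<^sub>R emb a c + r *\<^sub>R emb a' c' = emb (s *\<^sub>R a + r *\<^sub>R a') (s*c + r*c')"
  by (simp add: emb_def vec_eq_iff split: option.splits)

lemma phi_lin: "phi (s *\<^sub>R a + r *\<^sub>R b) = s * phi a + r * phi b"
  by (simp add: phi_def sum.distrib sum_distrib_left)

lemma sum_option: "(\<Sum>z\<in>(UNIV::'v::finite option set). f z) = f None + (\<Sum>v\<in>UNIV. f (Some v))"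
proof -
  have "(\<Sum>z\<in>(UNIV::'v option set). f z) = (\<Sum>z\<in>insert None (range Some). f z)"
    by (simp add: UNIV_option_conv[symmetric])
  also have "\<dots> = f None + (\<Sum>z\<in>range Some. f z)"
    by (subst sum.insert) auto
  also have "(\<Sum>z\<in>range Some. f z) = (\<Sum>v\<in>UNIV. f (Some v))"
    by (subst sum.reindex) (auto simp: inj_on_def)
  finally show ?thesis .
qed

lemma qe_formula:
  fixes a :: "real^'v::finite"
  shows "qform (pol_gram E D) (emb a c) = qform (graph_gram E) a + 2 * c * phi a + 2 * of_int D * c^2"
proof -
  have "qform (pol_gram E D) (emb a c) =
     c * (2 * D) * c + (\<Sum>w\<in>UNIV. c * a$w) + ((\<Sum>v\<in>UNIV. a$v * c) + qform (graph_gram E) a)"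
    by (simp add: qform_def sum_option emb_def pol_gram_def sum.distrib)
  also have "\<dots> = qform (graph_gram E) a + 2 * c * phi a + 2 * of_int D * c^2"
    by (simp add: phi_def sum_distrib_left sum_distrib_right power2_eq_square algebra_simps)
  finally show ?thesis .
qed

lemma gram_sym: "simple_graph E \<Longrightarrow> graph_gram E u v = graph_gram E v u"
  by (simp add: simple_graph_def graph_gram_def)

lemma hyp_pos:
  assumes "pos_inertia G = 1"
  shows "\<exists>p. qform G p > 0"
proof -
  obtain W where W: "posdef G W" "dim W = 1" using pi_mem[of G] assms by auto
  have "\<not> W \<subseteq> {0}"
  proof
    assume "W \<subseteq> {0}"
    then have "dim W \<le> dim {0::real^'a}" by (rule dim_subset)
    then show False using W by simp
  qed
  then obtain p where "p \<in> W" "p \<noteq> 0" by auto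
  then show ?thesis using W unfolding posdef_def by auto
qed

lemma case_no:
  fixes E :: "'v::finite \<Rightarrow> 'v \<Rightarrow> bool" and k :: "real^'v"
  assumes sym: "simple_graph E" and p: "qform (graph_gram E) p > 0"
    and rad: "\<And>u. (\<Sum>v\<in>UNIV. of_int (graph_gram E u v) * k$v) = 0"
    and phik: "phi k \<noteq> 0"
  shows "pos_inertia (pol_gram E D) \<ge> 2"
proof -
  let ?G = "graph_gram E"
  let ?Q = "qform ?G"
  define F where "F = phi p"
  define M where "M = F^2 / ?Q p + 1"
  define t where "t = (M - 2 * of_int D) / (2 * phi k)"
  have bk: "bil ?G y k = 0" for y
  proof -
    have "bil ?G y k = (\<Sum>i\<in>UNIV. y$i * (\<Sum>j\<in>UNIV. of_int (?G i j) * k$j))"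
      unfolding bil_def by (simp add: sum_distrib_left algebra_simps)
    then show ?thesis using rad by simp
  qed
  have symG: "\<And>i j. ?G i j = ?G j i" using gram_sym[OF sym] by blast
  have Qk: "?Q (c *\<^sub>R k) = 0" for c by (simp add: qform_bil bil_scale2 bk)
  have Qk1: "?Q k = 0" using Qk[of 1] by simp
  have QM: "?Q p * M - F^2 = ?Q p" using p by (simp add: M_def field_simps)
  have tM: "2 * t * phi k + 2 * of_int D = M" using phik by (simp add: t_def field_simps)
  show ?thesis
  proof (rule pi_ge2[where za = "emb p 0" and zb = "emb (t *\<^sub>R k) 1"])
    fix s r :: real assume sr: "s \<noteq> 0 \<or> r \<noteq> 0"
    have "s *\<^sub>R emb p 0 + r *\<^sub>R emb (t *\<^sub>R k) 1 = emb (s *\<^sub>R p + (r * t) *\<^sub>R k) r"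
      by (simp add: emb_comb)
    moreover have "?Q (s *\<^sub>R p + (r * t) *\<^sub>R k) = s^2 * ?Q p"
      using qform_add_sym[of ?G, OF symG, of "s *\<^sub>R p" "(r * t) *\<^sub>R k"]
      by (simp add: Qk Qk1 bil_scale2 bk qform_scale)
    moreover have "phi (s *\<^sub>R p + (r * t) *\<^sub>R k) = s * F + r * t * phi k"
      by (simp add: phi_lin F_def)
    ultimately have e: "qform (pol_gram E D) (s *\<^sub>R emb p 0 + r *\<^sub>R emb (t *\<^sub>R k) 1)
       = s^2 * ?Q p + 2 * r * s * F + r^2 * M"
      by (simp add: qe_formula tM[symmetric] power2_eq_square algebra_simps)
    have key: "?Q p * (s^2 * ?Q p + 2 * r * s * F + r^2 * M) = (?Q p * s + F * r)^2 + ?Q p * r^2"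
      using QM by (simp add: power2_eq_square algebra_simps) (metis (no_types, lifting) distrib_left mult.assoc mult.commute)
    have "?Q p * (s^2 * ?Q p + 2 * r * s * F + r^2 * M) > 0"
    proof (cases "r = 0")
      case True
      then have "s \<noteq> 0" using sr by simp
      then show ?thesis using True p by simp
    next
      case False
      then have "?Q p * r^2 > 0" using p by simp
      then show ?thesis unfolding key by (smt (verit) zero_le_power2)
    qed
    then show "qform (pol_gram E D) (s *\<^sub>R emb p 0 + r *\<^sub>R emb (t *\<^sub>R k) 1) > 0"
      unfolding e using p by (simp add: zero_less_mult_iff)
  qed
qed

lemma case_yes:
  fixes E :: "'v::finite \<Rightarrow> 'v \<Rightarrow> bool" and g :: "real^'v"
  assumes sym: "simple_graph E" and p: "qform (graph_gram E) p > 0"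
    and hyp: "\<And>W. posdef (graph_gram E) W \<Longrightarrow> dim W \<le> 1"
    and gv: "\<And>v. (\<Sum>u\<in>UNIV. g$u * of_int (graph_gram E u v)) = 1"
  shows "pos_inertia (pol_gram E D) = 1 \<longleftrightarrow> 2 * of_int D \<le> qform (graph_gram E) g"
proof -
  let ?G = "graph_gram E"
  let ?Q = "qform ?G"
  let ?Qe = "qform (pol_gram E D)"
  have symG: "\<And>i j. ?G i j = ?G j i" using gram_sym[OF sym] by blast
  have phib: "phi a = bil ?G a g" for a
  proof -
    have "bil ?G g a = (\<Sum>j\<in>UNIV. (\<Sum>i\<in>UNIV. g$i * of_int (?G i j)) * a$j)"
      unfolding bil_def by (subst sum.swap) (simp add: sum_distrib_right)
    then show ?thesis using gv bil_sym[of ?G, OF symG, of g a] by (simp add: phi_def)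
  qed
  have form: "?Qe (emb a c) = ?Q (a + c *\<^sub>R g) + c^2 * (2 * of_int D - ?Q g)" for a c
    using qform_add_sym[of ?G, OF symG, of a "c *\<^sub>R g"]
    by (simp add: qe_formula qform_scale bil_scale2 phib algebra_simps)
  have p0: "?Qe (emb p 0) > 0" using p by (simp add: qe_formula)
  show ?thesis
  proof
    assume h1: "pos_inertia (pol_gram E D) = 1"
    show "2 * of_int D \<le> ?Q g"
    proof (rule ccontr)
      assume "\<not> 2 * of_int D \<le> ?Q g"
      then have neg: "2 * of_int D - ?Q g > 0" by simp
      have "pos_inertia (pol_gram E D) \<ge> 2"
      proof (rule pi_ge2[where za = "emb p 0" and zb = "emb (- g) 1"])
        fix s r :: real assume sr: "s \<noteq> 0 \<or> r \<noteq> 0"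
        have "s *\<^sub>R emb p 0 + r *\<^sub>R emb (- g) 1 = emb (s *\<^sub>R p - r *\<^sub>R g) r"
          by (simp add: emb_comb)
        then have e: "?Qe (s *\<^sub>R emb p 0 + r *\<^sub>R emb (- g) 1) = s^2 * ?Q p + r^2 * (2 * of_int D - ?Q g)"
          by (simp add: form qform_scale)
        show "?Qe (s *\<^sub>R emb p 0 + r *\<^sub>R emb (- g) 1) > 0"
          unfolding e using sr p neg
          by (smt (verit) mult_pos_pos mult_nonneg_nonneg zero_le_power2 zero_less_power2)
      qed
      then show False using h1 by simp
    qed
  next
    assume ge: "2 * of_int D \<le> ?Q g"
    define \<pi> where "\<pi> = (\<lambda>x::real^('v option). av x + (x$None) *\<^sub>R g)"
    have lin: "linear \<pi>"
      unfolding linear_iff \<pi>_def av_def by (auto simp: vec_eq_iff algebra_simps)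
    have le: "?Qe x \<le> ?Q (\<pi> x)" for x
    proof -
      have "?Qe x = ?Qe (emb (av x) (x$None))" by (simp add: emb_av)
      also have "\<dots> = ?Q (\<pi> x) + (x$None)^2 * (2 * of_int D - ?Q g)"
        by (simp add: form \<pi>_def)
      also have "\<dots> \<le> ?Q (\<pi> x)" using ge
        by (simp add: mult_nonneg_nonpos)
      finally show ?thesis .
    qed
    have "pos_inertia (pol_gram E D) \<le> 1"
    proof (rule pi_le1)
      fix W assume W: "posdef (pol_gram E D) W"
      then have sW: "subspace W" and pW: "\<And>x. x \<in> W \<Longrightarrow> x \<noteq> 0 \<Longrightarrow> ?Qe x > 0"
        unfolding posdef_def by auto
      have inj: "inj_on \<pi> (span W)"
        unfolding span_eq_iff[THEN iffD2, OF sW]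
        using linear_inj_on_iff_eq_0[OF lin sW] pW le
        by (metis qform_zero not_le)
      have "posdef ?G (\<pi> ` W)"
        unfolding posdef_def
      proof (intro conjI ballI impI)
        show "subspace (\<pi> ` W)" by (rule linear_subspace_image[OF lin sW])
      next
        fix y assume "y \<in> \<pi> ` W" "y \<noteq> 0"
        then obtain x where x: "x \<in> W" "y = \<pi> x" by auto
        then have "x \<noteq> 0" using \<open>y \<noteq> 0\<close> linear_0[OF lin] by auto
        then show "?Q y > 0" using pW[OF x(1)] le[of x] x(2) by simp
      qed
      then have "dim (\<pi> ` W) \<le> 1" by (rule hyp)
      then show "dim W \<le> 1" using dim_image_eq[OF lin inj] by simp
    qed
    moreover have "pos_inertia (pol_gram E D) \<ge> 1" by (rule pi_ge1[OF p0])
    ultimately show "pos_inertia (pol_gram E D) = 1" by simp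
  qed
qed

lemma intr_sum_k:
  assumes sym: "simple_graph E" and h: "intrinsic_pol E h"
  shows "(\<Sum>w\<in>UNIV. k w) = (\<Sum>u\<in>UNIV. h u * (\<Sum>w\<in>UNIV. of_int (graph_gram E u w) * k w))"
proof -
  have "(\<Sum>w\<in>UNIV. k w) = (\<Sum>w\<in>UNIV. (\<Sum>u\<in>UNIV. h u * of_int (graph_gram E u w)) * k w)"
    using h by (simp add: intrinsic_pol_def)
  also have "\<dots> = (\<Sum>u\<in>UNIV. h u * (\<Sum>w\<in>UNIV. of_int (graph_gram E u w) * k w))"
    by (simp add: sum_distrib_right sum_distrib_left algebra_simps) (rule sum.swap)
  finally show ?thesis .
qed

lemma intr_ps:
  assumes h: "intrinsic_pol E h"
  shows "pol_square E h = (\<Sum>w\<in>UNIV. h w)"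
proof -
  have "pol_square E h = (\<Sum>w\<in>UNIV. (\<Sum>u\<in>UNIV. h u * of_int (graph_gram E u w)) * h w)"
    unfolding pol_square_def
    by (subst sum.swap) (simp add: sum_distrib_left sum_distrib_right algebra_simps)
  then show ?thesis using h by (simp add: intrinsic_pol_def)
qed

lemma intr_ps_eq:
  assumes sym: "simple_graph E" and h: "intrinsic_pol E h" and g: "intrinsic_pol E g"
  shows "pol_square E h = pol_square E g"
proof -
  have "(\<Sum>w\<in>UNIV. h w) = (\<Sum>u\<in>UNIV. g u * (\<Sum>w\<in>UNIV. of_int (graph_gram E u w) * h w))"
    by (rule intr_sum_k[OF sym g])
  also have "\<dots> = (\<Sum>u\<in>UNIV. g u)"
  proof (rule sum.cong)
    fix u
    have "(\<Sum>w\<in>UNIV. of_int (graph_gram E u w) * h w) = (\<Sum>w\<in>UNIV. h w * of_int (graph_gram E w u))"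
      using gram_sym[OF sym] by (simp add: mult.commute)
    then show "g u * (\<Sum>w\<in>UNIV. of_int (graph_gram E u w) * h w) = g u"
      using h by (simp add: intrinsic_pol_def)
  qed simp
  finally show ?thesis using intr_ps[OF h] intr_ps[OF g] by simp
qed

theorem proposition2p8:
  fixes E :: "'v::finite \<Rightarrow> 'v \<Rightarrow> bool" and D :: int
  assumes "simple_graph E" and "hyperbolic_graph E" and "D \<ge> 2"
  shows "Fh_hyperbolic E D \<longleftrightarrow>
           (\<exists>h. intrinsic_pol E h \<and> of_int (2 * D) \<le> pol_square E h)"
proof -
  note sym = assms(1)
  let ?G = "graph_gram E"
  have h1: "pos_inertia ?G = 1" using assms(2) by (simp add: hyperbolic_graph_def hyperbolic_form_def)
  obtain p where p: "qform ?G p > 0" using hyp_pos[OF h1] by blast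
  have hyp: "dim W \<le> 1" if "posdef ?G W" for W using pi_ge[OF that] h1 by simp
  from fredholm[where A = "\<lambda>u v. (of_int (?G u v) :: rat)" and b = "\<lambda>_. 1"
      and I = UNIV and J = UNIV]
  show ?thesis
  proof
    assume "\<exists>g. \<forall>j\<in>UNIV. (\<Sum>i\<in>UNIV. g i * of_int (?G i j)) = (1::rat)"
    then obtain g where g: "\<And>j. (\<Sum>i\<in>UNIV. g i * of_int (?G i j)) = (1::rat)" by blast
    have gi: "intrinsic_pol E g" using g by (simp add: intrinsic_pol_def)
    define gr where "gr = (\<chi> u. real_of_rat (g u))"
    have gv: "(\<Sum>u\<in>UNIV. gr$u * of_int (?G u v)) = 1" for v
    proof -
      have "real_of_rat (\<Sum>i\<in>UNIV. g i * of_int (?G i v)) = 1" using g[of v] by simp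
      then show ?thesis by (simp add: gr_def of_rat_sum of_rat_mult)
    qed
    have Qg: "qform ?G gr = real_of_rat (pol_square E g)"
      by (simp add: qform_def pol_square_def gr_def of_rat_sum of_rat_mult algebra_simps)
    have "Fh_hyperbolic E D \<longleftrightarrow> 2 * of_int D \<le> qform ?G gr"
      unfolding Fh_hyperbolic_def hyperbolic_form_def
      by (rule case_yes[OF sym p hyp gv])
    also have "\<dots> \<longleftrightarrow> of_int (2 * D) \<le> pol_square E g"
    proof -
      have "(2 * of_int D :: real) = real_of_rat (of_int (2 * D))" by (simp add: of_rat_mult)
      then show ?thesis unfolding Qg by (metis of_rat_less_eq)
    qed
    also have "\<dots> \<longleftrightarrow> (\<exists>h. intrinsic_pol E h \<and> of_int (2 * D) \<le> pol_square E h)"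
      using gi intr_ps_eq[OF sym _ gi] by metis
    finally show ?thesis .
  next
    assume "\<exists>k. (\<forall>i\<in>UNIV. (\<Sum>j\<in>UNIV. of_int (?G i j) * k j) = 0) \<and> (\<Sum>j\<in>UNIV. 1 * k j) \<noteq> (0::rat)"
    then obtain k where k1: "\<And>i. (\<Sum>j\<in>UNIV. of_int (?G i j) * k j) = (0::rat)"
      and k2: "(\<Sum>j\<in>UNIV. k j) \<noteq> 0" by auto
    define kr where "kr = (\<chi> u. real_of_rat (k u))"
    have rad: "(\<Sum>v\<in>UNIV. of_int (?G u v) * kr$v) = 0" for u
    proof -
      have "real_of_rat (\<Sum>j\<in>UNIV. of_int (?G u j) * k j) = 0" using k1[of u] by simp
      then show ?thesis by (simp add: kr_def of_rat_sum of_rat_mult)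
    qed
    have phik: "phi kr \<noteq> 0"
    proof -
      have "real_of_rat (\<Sum>j\<in>UNIV. k j) \<noteq> 0" using k2 by simp
      then show ?thesis by (simp add: phi_def kr_def of_rat_sum)
    qed
    have "pos_inertia (pol_gram E D) \<ge> 2" by (rule case_no[OF sym p rad phik])
    then have "\<not> Fh_hyperbolic E D" by (simp add: Fh_hyperbolic_def hyperbolic_form_def)
    moreover have "\<not> intrinsic_pol E h" for h
    proof
      assume "intrinsic_pol E h"
      from intr_sum_k[OF sym this, of k] k1 k2 show False by simp
    qed
    ultimately show ?thesis by blast
  qed simp_all
qed

end
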